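(* Let $(X,d)$ be a metric space, $M>0$, $\delta>0$, $f:X\to[0,M]$ a function, $g:X\to[0,\infty)$ a continuous bounded function, and $A\subset X$ a closed set. Define $$\tilde f(x)=\min\Big\{M,\ \inf_{(p_0,\dots,p_n)\in\mathcal{P}(\delta,A,x)} f(p_0)+\sum_{k=0}^{n-1}g(p_k)d(p_k,p_{k+1})\Big\}.$$ Then: (A) $\tilde f:X\to[0,M]$; (B) for each $x\in A$, $0\le\tilde f(x)\le f(x)$; (C) if $x\in A$ and $f(x)=0$ then $\tilde f(x)=0$; (D) for all $x,y\in X$ with $d(x,y)\le\delta$, $|\tilde f(x)-\tilde f(y)|\le\max\{g(x),g(y)\}d(x,y)$; (E) $\mathrm{lip}_a[\tilde f](x)\le g(x)$ for every $x\in X$; (F) $\tilde f$ is $\max\{M\delta^{-1},\sup_{x\in X}g(x)\}$-Lipschitz.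
   Context: A discrete path is a finite sequence $P=(p_0,\dots,p_n)$ of points of $X$ with $n\ge1$; its mesh is $\max_{0\le k\le n-1}d(p_k,p_{k+1})$. For $x\in X$, $\mathcal{P}(\delta,A,x)$ is the set of discrete paths $(p_0,\dots,p_n)$ with mesh at most $\delta$, $p_0\in A$ and $p_n=x$ (the infimum over the empty set is $+\infty$). $\mathrm{lip}_a[h](x)=\lim_{r\to0}\sup_{a\ne b\in B(x,r)}\frac{|h(a)-h(b)|}{d(a,b)}$, and $\mathrm{lip}_a[h](x)=0$ if $x$ is isolated. *)

theory Defs
  imports "HOL-Analysis.Analysis"
begin

text \<open>A discrete path (p_0,...,p_n), n >= 1, is represented by a pair (n, p) with
  p :: nat => 'a; only the values p 0, ..., p n matter.\<close>

definition disc_paths :: "real \<Rightarrow> 'a::metric_space set \<Rightarrow> 'a \<Rightarrow> (nat \<times> (nat \<Rightarrow> 'a)) set" where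
  "disc_paths \<delta> A x = {(n, p). 1 \<le> n \<and> p 0 \<in> A \<and> p n = x \<and>
       (\<forall>k<n. dist (p k) (p (Suc k)) \<le> \<delta>)}"

definition path_cost :: "('a::metric_space \<Rightarrow> real) \<Rightarrow> ('a \<Rightarrow> real) \<Rightarrow> nat \<times> (nat \<Rightarrow> 'a) \<Rightarrow> real" where
  "path_cost f g P = f (snd P 0) + (\<Sum>k<fst P. g (snd P k) * dist (snd P k) (snd P (Suc k)))"

text \<open>min{M, inf ...}, where the infimum over the empty set is +infinity.\<close>
definition ftilde :: "('a::metric_space \<Rightarrow> real) \<Rightarrow> ('a \<Rightarrow> real) \<Rightarrow> real \<Rightarrow> real \<Rightarrow> 'a set \<Rightarrow> 'a \<Rightarrow> real" where
  "ftilde f g M \<delta> A x =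
     real_of_ereal (min (ereal M) (INF P\<in>disc_paths \<delta> A x. ereal (path_cost f g P)))"

definition lip_a :: "('a::metric_space \<Rightarrow> real) \<Rightarrow> 'a \<Rightarrow> ereal" where
  "lip_a h x = (if \<not> x islimpt UNIV then 0 else
     Lim (at_right (0::real))
       (\<lambda>r. SUP (a, b)\<in>{(a, b). a \<in> ball x r \<and> b \<in> ball x r \<and> a \<noteq> b}.
              ereal (\<bar>h a - h b\<bar> / dist a b)))"

end

theory Submission
  imports Defs
begin

lemma cost_nonneg:
  assumes "\<And>x. 0 \<le> f x" "\<And>x. 0 \<le> g x"
  shows "0 \<le> path_cost f g P"
  unfolding path_cost_def using assms by (auto intro!: add_nonneg_nonneg sum_nonneg mult_nonneg_nonneg)

lemma I_nonneg:
  assumes "\<And>x. 0 \<le> f x" "\<And>x. 0 \<le> g x"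
  shows "0 \<le> (INF P\<in>disc_paths \<delta> A x. ereal (path_cost f g P))"
  using cost_nonneg[OF assms] by (auto intro!: INF_greatest)

lemma ft_ereal:
  assumes "\<And>x. 0 \<le> f x" "\<And>x. 0 \<le> g x" "M \<ge> 0"
  shows "ereal (ftilde f g M \<delta> A x) = min (ereal M) (INF P\<in>disc_paths \<delta> A x. ereal (path_cost f g P))"
proof -
  let ?I = "(INF P\<in>disc_paths \<delta> A x. ereal (path_cost f g P))"
  have "0 \<le> ?I" by (rule I_nonneg[OF assms(1,2)])
  then have "min (ereal M) ?I \<noteq> \<infinity>" "min (ereal M) ?I \<noteq> -\<infinity>"
    by (auto simp: min_def split: if_splits)
  then show ?thesis unfolding ftilde_def by (cases "min (ereal M) ?I") auto
qed

lemma ft_bounds: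
  assumes "\<And>x. 0 \<le> f x" "\<And>x. 0 \<le> g x" "M \<ge> 0"
  shows "0 \<le> ftilde f g M \<delta> A x \<and> ftilde f g M \<delta> A x \<le> M"
proof -
  have e: "ereal (ftilde f g M \<delta> A x) = min (ereal M) (INF P\<in>disc_paths \<delta> A x. ereal (path_cost f g P))"
    by (rule ft_ereal[OF assms])
  have "0 \<le> (INF P\<in>disc_paths \<delta> A x. ereal (path_cost f g P))" by (rule I_nonneg[OF assms(1,2)])
  then have "ereal 0 \<le> ereal (ftilde f g M \<delta> A x)" "ereal (ftilde f g M \<delta> A x) \<le> ereal M"
    unfolding e using assms(3) by (auto simp: zero_ereal_def[symmetric])
  then show ?thesis by simp
qed

lemma ft_le_f:
  assumes "\<And>x. 0 \<le> f x" "\<And>x. 0 \<le> g x" "M \<ge> 0" "x \<in> A" "\<delta> \<ge> 0"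
  shows "ftilde f g M \<delta> A x \<le> f x"
proof -
  have P: "(1::nat, \<lambda>_. x) \<in> disc_paths \<delta> A x" using assms unfolding disc_paths_def by auto
  have "(INF P\<in>disc_paths \<delta> A x. ereal (path_cost f g P)) \<le> ereal (path_cost f g (1, \<lambda>_. x))"
    by (rule INF_lower[OF P])
  also have "\<dots> = ereal (f x)" by (simp add: path_cost_def)
  finally have "ereal (ftilde f g M \<delta> A x) \<le> ereal (f x)"
    unfolding ft_ereal[OF assms(1-3)] by (simp add: min.coboundedI2)
  then show ?thesis by simp
qed

lemma I_step:
  assumes "\<And>x. 0 \<le> f x" "\<And>x. 0 \<le> g x" "dist x y \<le> \<delta>"
  shows "(INF P\<in>disc_paths \<delta> A x. ereal (path_cost f g P))
     \<le> (INF P\<in>disc_paths \<delta> A y. ereal (path_cost f g P)) + ereal (g y * dist y x)"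
proof (cases "disc_paths \<delta> A y = {}")
  case True then show ?thesis by (simp add: top_ereal_def)
next
  case False
  have "(INF P\<in>disc_paths \<delta> A x. ereal (path_cost f g P))
     \<le> (INF P\<in>disc_paths \<delta> A y. ereal (path_cost f g P) + ereal (g y * dist y x))"
  proof (rule INF_greatest)
    fix P assume "P \<in> disc_paths \<delta> A y"
    then obtain n p where Pnp: "P = (n, p)" "1 \<le> n" "p 0 \<in> A" "p n = y" "\<forall>k<n. dist (p k) (p (Suc k)) \<le> \<delta>"
      unfolding disc_paths_def by auto
    define q where "q = p(Suc n := x)"
    have q: "(Suc n, q) \<in> disc_paths \<delta> A x"
      unfolding disc_paths_def q_def using Pnp assms(3) by (auto simp: less_Suc_eq dist_commute)
    have "path_cost f g (Suc n, q) = path_cost f g P + g y * dist y x"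
    proof -
      have "(\<Sum>k<n. g (q k) * dist (q k) (q (Suc k))) = (\<Sum>k<n. g (p k) * dist (p k) (p (Suc k)))"
        by (rule sum.cong) (auto simp: q_def)
      then show ?thesis using Pnp by (simp add: path_cost_def q_def)
    qed
    then have "ereal (path_cost f g (Suc n, q)) = ereal (path_cost f g P) + ereal (g y * dist y x)" by simp
    moreover have "(INF P\<in>disc_paths \<delta> A x. ereal (path_cost f g P)) \<le> ereal (path_cost f g (Suc n, q))"
      by (rule INF_lower[OF q])
    ultimately show "(INF P\<in>disc_paths \<delta> A x. ereal (path_cost f g P)) \<le> ereal (path_cost f g P) + ereal (g y * dist y x)"
      by simp
  qed
  also have "\<dots> = (INF P\<in>disc_paths \<delta> A y. ereal (path_cost f g P)) + ereal (g y * dist y x)"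
    by (rule INF_ereal_add_left[OF False]) (auto intro: cost_nonneg[OF assms(1,2)])
  finally show ?thesis .
qed

lemma ft_step:
  assumes "\<And>x. 0 \<le> f x" "\<And>x. 0 \<le> g x" "M \<ge> 0" "dist x y \<le> \<delta>"
  shows "ftilde f g M \<delta> A x \<le> ftilde f g M \<delta> A y + g y * dist x y"
proof -
  let ?I = "\<lambda>x. (INF P\<in>disc_paths \<delta> A x. ereal (path_cost f g P))"
  have c: "0 \<le> g y * dist x y" using assms(2) by simp
  have "min (ereal M) (?I x) \<le> min (ereal M) (?I y + ereal (g y * dist x y))"
  proof -
    have "?I x \<le> ?I y + ereal (g y * dist y x)" by (rule I_step) (use assms in auto)
    then show ?thesis by (simp add: dist_commute min.coboundedI2)
  qed
  also have "\<dots> \<le> min (ereal M) (?I y) + ereal (g y * dist x y)"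
    using c by (cases "?I y") (auto simp: min_def)
  finally have "ereal (ftilde f g M \<delta> A x) \<le> ereal (ftilde f g M \<delta> A y) + ereal (g y * dist x y)"
    unfolding ft_ereal[OF assms(1-3)] .
  then show ?thesis by simp
qed

lemma lip_a_le:
  fixes h :: "'a::metric_space \<Rightarrow> real"
  assumes c: "0 \<le> c"
    and H: "\<And>e. e > 0 \<Longrightarrow> \<exists>r>0. \<forall>a b. a \<in> ball x r \<longrightarrow> b \<in> ball x r \<longrightarrow> a \<noteq> b
              \<longrightarrow> \<bar>h a - h b\<bar> / dist a b \<le> c + e"
  shows "lip_a h x \<le> ereal c"
proof (cases "x islimpt UNIV")
  case False then show ?thesis using c by (simp add: lip_a_def)
next
  case True
  define F where "F = (\<lambda>r::real. SUP (a, b)\<in>{(a, b). a \<in> ball x r \<and> b \<in> ball x r \<and> a \<noteq> b}.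
              ereal (\<bar>h a - h b\<bar> / dist a b))"
  have mono: "F r \<le> F s" if "r \<le> s" for r s
    unfolding F_def by (rule SUP_subset_mono) (use that in auto)
  define L where "L = (INF r\<in>{0<..}. F r)"
  have lim: "(F \<longlongrightarrow> L) (at_right 0)"
  proof (rule order_tendstoI)
    fix a assume "a < L"
    then show "eventually (\<lambda>r. a < F r) (at_right 0)"
      unfolding eventually_at_right_field L_def
      by (intro exI[of _ 1]) (auto intro: less_le_trans INF_lower)
  next
    fix a assume "L < a"
    then obtain s where s: "s \<in> {0<..}" "F s < a" unfolding L_def by (auto simp: INF_less_iff)
    then show "eventually (\<lambda>r. F r < a) (at_right 0)"
      unfolding eventually_at_right_field
      using s(1) proof (intro exI[of _ s] conjI allI impI)
        fix y :: real assume "0 < y" "y < s"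
        then have "F y \<le> F s" by (intro mono) simp
        then show "F y < a" using s(2) by simp
      qed simp
  qed
  have "Lim (at_right (0::real)) F = L"
    by (rule tendsto_Lim[OF _ lim]) simp
  then have eq: "lip_a h x = L" using True unfolding lip_a_def F_def by simp
  have "L \<le> ereal c"
  proof (rule ereal_le_epsilon2)
    fix e :: real assume "0 < e"
    from H[OF this] obtain r where r: "r > 0" "\<forall>a b. a \<in> ball x r \<longrightarrow> b \<in> ball x r \<longrightarrow> a \<noteq> b
              \<longrightarrow> \<bar>h a - h b\<bar> / dist a b \<le> c + e" by blast
    have "L \<le> F r" unfolding L_def using r by (auto intro: INF_lower)
    also have "F r \<le> ereal (c + e)"
      unfolding F_def using r(2) by (auto intro!: SUP_least)
    finally show "L \<le> ereal c + ereal e" by simp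
  qed
  then show ?thesis using eq by simp
qed


theorem lemma2p4:
  fixes f g :: "'a::metric_space \<Rightarrow> real" and M \<delta> :: real and A :: "'a set"
  assumes "M > 0" and "\<delta> > 0"
    and "\<And>x. 0 \<le> f x \<and> f x \<le> M"
    and "\<And>x. 0 \<le> g x" and "continuous_on UNIV g" and "bounded (range g)"
    and "closed A"
  defines "ft \<equiv> ftilde f g M \<delta> A"
  shows "(\<forall>x. 0 \<le> ft x \<and> ft x \<le> M)
    \<and> (\<forall>x\<in>A. 0 \<le> ft x \<and> ft x \<le> f x)
    \<and> (\<forall>x\<in>A. f x = 0 \<longrightarrow> ft x = 0)
    \<and> (\<forall>x y. dist x y \<le> \<delta> \<longrightarrow> \<bar>ft x - ft y\<bar> \<le> max (g x) (g y) * dist x y)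
    \<and> (\<forall>x. lip_a ft x \<le> ereal (g x))
    \<and> ((max (M / \<delta>) (SUP x. g x))-lipschitz_on UNIV ft)"
proof -
  have f0: "\<And>x. 0 \<le> f x" using assms(3) by blast
  have g0: "\<And>x. 0 \<le> g x" by (rule assms(4))
  have M0: "M \<ge> 0" using assms(1) by simp
  have A: "\<forall>x. 0 \<le> ft x \<and> ft x \<le> M" unfolding ft_def using ft_bounds[where f=f and g=g, OF f0 g0 M0] by blast
  have B: "\<forall>x\<in>A. 0 \<le> ft x \<and> ft x \<le> f x"
    unfolding ft_def using ft_bounds[where f=f and g=g, OF f0 g0 M0] ft_le_f[where f=f and g=g, OF f0 g0 M0] assms(2) by auto
  have C: "\<forall>x\<in>A. f x = 0 \<longrightarrow> ft x = 0" using B by force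
  have D: "\<forall>x y. dist x y \<le> \<delta> \<longrightarrow> \<bar>ft x - ft y\<bar> \<le> max (g x) (g y) * dist x y"
  proof (intro allI impI)
    fix x y :: 'a assume d: "dist x y \<le> \<delta>"
    have 1: "ft x \<le> ft y + g y * dist x y" unfolding ft_def by (rule ft_step[where f=f and g=g, OF f0 g0 M0 d])
    have 2: "ft y \<le> ft x + g x * dist y x" unfolding ft_def by (rule ft_step[where f=f and g=g, OF f0 g0 M0]) (use d in \<open>simp add: dist_commute\<close>)
    have "g y * dist x y \<le> max (g x) (g y) * dist x y" by (intro mult_right_mono) auto
    moreover have "g x * dist x y \<le> max (g x) (g y) * dist x y" by (intro mult_right_mono) auto
    ultimately show "\<bar>ft x - ft y\<bar> \<le> max (g x) (g y) * dist x y" using 1 2 by (simp add: dist_commute abs_le_iff)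
  qed
  have E: "\<forall>x. lip_a ft x \<le> ereal (g x)"
  proof
    fix x :: 'a
    show "lip_a ft x \<le> ereal (g x)"
    proof (rule lip_a_le[where c="g x", OF g0])
      fix e :: real assume e: "e > 0"
      have "isCont g x" using assms(5) by (simp add: continuous_on_eq_continuous_at)
      then obtain d where d: "d > 0" "\<forall>z. dist z x < d \<longrightarrow> dist (g z) (g x) < e"
        using e unfolding continuous_at_eps_delta by blast
      define r where "r = min d (\<delta> / 2)"
      have r: "r > 0" using d assms(2) by (simp add: r_def)
      show "\<exists>r>0. \<forall>a b. a \<in> ball x r \<longrightarrow> b \<in> ball x r \<longrightarrow> a \<noteq> b
              \<longrightarrow> \<bar>ft a - ft b\<bar> / dist a b \<le> g x + e"
      proof (intro exI[of _ r] conjI allI impI r)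
        fix a b assume ab: "a \<in> ball x r" "b \<in> ball x r" "a \<noteq> b"
        have "dist a b \<le> dist a x + dist b x" by (rule dist_triangle2)
        also have "\<dots> < \<delta>" using ab unfolding r_def by (auto simp: dist_commute)
        finally have dab: "dist a b \<le> \<delta>" by simp
        have ga: "g a \<le> g x + e" using d(2)[rule_format, of a] ab r_def by (auto simp: dist_commute dist_real_def)
        have gb: "g b \<le> g x + e" using d(2)[rule_format, of b] ab r_def by (auto simp: dist_commute dist_real_def)
        have pos: "dist a b > 0" using ab by simp
        have "\<bar>ft a - ft b\<bar> \<le> max (g a) (g b) * dist a b" using D dab by blast
        also have "\<dots> \<le> (g x + e) * dist a b" using ga gb pos by (intro mult_right_mono) auto
        finally show "\<bar>ft a - ft b\<bar> / dist a b \<le> g x + e" using pos by (simp add: divide_le_eq)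
      qed
    qed
  qed
  have F: "(max (M / \<delta>) (SUP x. g x))-lipschitz_on UNIV ft"
  proof (rule lipschitz_onI)
    have bdd: "bdd_above (range g)" using assms(6) by (rule bounded_imp_bdd_above)
    show "0 \<le> max (M / \<delta>) (SUP x. g x)" using M0 assms(2) by (simp add: le_max_iff_disj)
    fix x y :: 'a
    show "dist (ft x) (ft y) \<le> max (M / \<delta>) (SUP x. g x) * dist x y"
    proof (cases "dist x y \<le> \<delta>")
      case True
      have "max (g x) (g y) \<le> (SUP x. g x)" using bdd by (auto intro: cSUP_upper)
      then have "max (g x) (g y) \<le> max (M / \<delta>) (SUP x. g x)" by (simp add: le_max_iff_disj)
      then have "max (g x) (g y) * dist x y \<le> max (M / \<delta>) (SUP x. g x) * dist x y"
        by (intro mult_right_mono) auto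
      then show ?thesis using D True by (simp add: dist_real_def) (meson order_trans)
    next
      case False
      have "dist (ft x) (ft y) \<le> M" using A by (simp add: dist_real_def abs_le_iff) (smt (verit))
      also have "M = M / \<delta> * \<delta>" using assms(2) by simp
      also have "\<dots> \<le> M / \<delta> * dist x y" using False M0 assms(2) by (intro mult_left_mono) auto
      also have "\<dots> \<le> max (M / \<delta>) (SUP x. g x) * dist x y" by (intro mult_right_mono) auto
      finally show ?thesis .
    qed
  qed
  show ?thesis using A B C D E F by blast
qed

end
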